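(* Let $k=b/\ln b$ and $T'_w=4(b+1)\ln b+2b\ln\ln b$. For all sufficiently large $b$, for the maximal one-step coupling $(X_t,Y_t)$ of the Glauber dynamics on proper $k$-colorings of the star graph $G^*$ started from any pair $(x_0,y_0)$, with probability at least $1/(2\ln^2 b)$ every leaf $\ell_i$ with $X_{T'_w}(\ell_i)\ne Y_{T'_w}(\ell_i)$ satisfies $X_{T'_w}(\ell_i)=Y_{T'_w}(r)$ and $Y_{T'_w}(\ell_i)=X_{T'_w}(r)$.
   Context: $G^*$: star graph with root $r$ and leaves $\ell_1,\dots,\ell_b$. Heat-bath Glauber dynamics for proper $k$-colorings: choose a uniform vertex $v$ and recolor it uniformly from its available colors $A_\sigma(v)=\{c: c\ne\sigma(u)\ \forall u\sim v\}$. The maximal one-step coupling: both chains choose the same uniformly random vertex $v$; for each $c\in A_{X_t}(v)\cap A_{Y_t}(v)$, with probability $1/\max\{|A_{X_t}(v)|,|A_{Y_t}(v)|\}$ both set $v$ to $c$; otherwise colors are chosen from the correct marginals, coupled arbitrarily. *)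

theory Defs
  imports "HOL-Probability.Probability"
begin

text \<open>Star graph with root 0 and leaves 1..b (leaf i is vertex i). Vertex set is {..b}.\<close>
definition star_adj :: "nat \<Rightarrow> nat \<Rightarrow> nat \<Rightarrow> bool" where
  "star_adj b u v \<longleftrightarrow> (u = 0 \<and> 1 \<le> v \<and> v \<le> b) \<or> (v = 0 \<and> 1 \<le> u \<and> u \<le> b)"

definition avail :: "nat \<Rightarrow> nat \<Rightarrow> (nat \<Rightarrow> nat) \<Rightarrow> nat \<Rightarrow> nat set" where
  "avail b k \<sigma> v = {c. c < k \<and> (\<forall>u. star_adj b v u \<longrightarrow> c \<noteq> \<sigma> u)}"

definition proper_col :: "nat \<Rightarrow> nat \<Rightarrow> (nat \<Rightarrow> nat) \<Rightarrow> bool" where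
  "proper_col b k \<sigma> \<longleftrightarrow> (\<forall>v\<le>b. \<sigma> v < k) \<and> (\<forall>u v. star_adj b u v \<longrightarrow> \<sigma> u \<noteq> \<sigma> v)"

text \<open>A (possibly time- and state-dependent) choice of one-step coupling kernels
  K t x y v (the joint law of the new colours of v in the two chains) that is a
  maximal one-step coupling: correct heat-bath marginals, and for every common
  available colour c, both chains take c with probability 1/max(|A_X(v)|,|A_Y(v)|).\<close>
definition max_coupling ::
  "nat \<Rightarrow> nat \<Rightarrow> (nat \<Rightarrow> (nat \<Rightarrow> nat) \<Rightarrow> (nat \<Rightarrow> nat) \<Rightarrow> nat \<Rightarrow> (nat \<times> nat) pmf) \<Rightarrow> bool" where
  "max_coupling b k K \<longleftrightarrow>
    (\<forall>t x y v. proper_col b k x \<and> proper_col b k y \<and> v \<le> b \<longrightarrow>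
       map_pmf fst (K t x y v) = pmf_of_set (avail b k x v) \<and>
       map_pmf snd (K t x y v) = pmf_of_set (avail b k y v) \<and>
       (\<forall>c \<in> avail b k x v \<inter> avail b k y v.
          pmf (K t x y v) (c, c) =
            1 / real (max (card (avail b k x v)) (card (avail b k y v)))))"

definition coupled_step ::
  "nat \<Rightarrow> (nat \<Rightarrow> (nat \<Rightarrow> nat) \<Rightarrow> (nat \<Rightarrow> nat) \<Rightarrow> nat \<Rightarrow> (nat \<times> nat) pmf) \<Rightarrow> nat \<Rightarrow>
     (nat \<Rightarrow> nat) \<times> (nat \<Rightarrow> nat) \<Rightarrow> ((nat \<Rightarrow> nat) \<times> (nat \<Rightarrow> nat)) pmf" where
  "coupled_step b K t s =
     bind_pmf (pmf_of_set {..b}) (\<lambda>v.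
       map_pmf (\<lambda>(c, d). ((fst s)(v := c), (snd s)(v := d))) (K t (fst s) (snd s) v))"

primrec coupled_dist ::
  "nat \<Rightarrow> (nat \<Rightarrow> (nat \<Rightarrow> nat) \<Rightarrow> (nat \<Rightarrow> nat) \<Rightarrow> nat \<Rightarrow> (nat \<times> nat) pmf) \<Rightarrow>
     (nat \<Rightarrow> nat) \<Rightarrow> (nat \<Rightarrow> nat) \<Rightarrow> nat \<Rightarrow> ((nat \<Rightarrow> nat) \<times> (nat \<Rightarrow> nat)) pmf" where
  "coupled_dist b K x0 y0 0 = return_pmf (x0, y0)"
| "coupled_dist b K x0 y0 (Suc t) = bind_pmf (coupled_dist b K x0 y0 t) (coupled_step b K t)"

definition num_colors :: "nat \<Rightarrow> nat" where
  "num_colors b = nat \<lfloor>real b / ln (real b)\<rfloor>"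

definition T_w :: "nat \<Rightarrow> nat" where
  "T_w b = nat \<lceil>4 * (real b + 1) * ln (real b) + 2 * real b * ln (ln (real b))\<rceil>"

end

theory Submission
  imports Defs
begin


lemma integral_bind_pmf_bdd:
  fixes g :: "'b \<Rightarrow> real"
  assumes "\<And>y. \<bar>g y\<bar> \<le> B"
  shows "(\<integral>y. g y \<partial>measure_pmf (bind_pmf M N)) = (\<integral>x. (\<integral>y. g y \<partial>measure_pmf (N x)) \<partial>measure_pmf M)"
  unfolding measure_pmf_bind
  by (rule integral_bind[where K="count_space UNIV" and B=B and B'=1])
     (auto simp: assms measure_pmf.finite_measure measure_subprob intro!: AE_pmfI measure_pmf.emeasure_le_1)

lemma prob_bind_pmf:
  "measure_pmf.prob (bind_pmf M N) A = (\<integral>x. measure_pmf.prob (N x) A \<partial>measure_pmf M)"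
  unfolding measure_pmf_bind
  by (rule measure_pmf.measure_bind[where N="count_space UNIV"]) (auto simp: measure_subprob)

lemma integral_mono_pmf:
  fixes f g :: "'b \<Rightarrow> real"
  assumes "\<And>x. x \<in> set_pmf M \<Longrightarrow> f x \<le> g x" "\<And>y. \<bar>f y\<bar> \<le> B" "\<And>y. \<bar>g y\<bar> \<le> B"
  shows "(\<integral>x. f x \<partial>measure_pmf M) \<le> (\<integral>x. g x \<partial>measure_pmf M)"
  apply (rule integral_mono_AE)
  apply (rule measure_pmf.integrable_const_bound[where B=B]; use assms in auto)
  apply (rule measure_pmf.integrable_const_bound[where B=B]; use assms in auto)
  using assms by (auto intro!: AE_pmfI)



lemma star_adj_leaf: "1 \<le> i \<Longrightarrow> i \<le> b \<Longrightarrow> star_adj b i u \<longleftrightarrow> u = 0"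
  unfolding star_adj_def by auto

lemma avail_leaf: "1 \<le> i \<Longrightarrow> i \<le> b \<Longrightarrow> avail b k x i = {c. c < k \<and> c \<noteq> x 0}"
  unfolding avail_def using star_adj_leaf by auto

lemma avail_finite: "finite (avail b k x v)"
  unfolding avail_def by (rule finite_subset[of _ "{..<k}"]) auto

lemma avail_root_mem: "proper_col b k x \<Longrightarrow> x 0 \<in> avail b k x 0"
  unfolding avail_def proper_col_def by auto

lemma card_avail_leaf:
  assumes "proper_col b k x" "1 \<le> i" "i \<le> b"
  shows "card (avail b k x i) = k - 1"
proof -
  have "x 0 < k" using assms(1) unfolding proper_col_def by auto
  have "avail b k x i = {..<k} - {x 0}" using avail_leaf[OF assms(2,3)] by auto
  then show ?thesis using \<open>x 0 < k\<close> by simp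
qed

lemma avail_nonempty:
  assumes "proper_col b k x" "v \<le> b" "2 \<le> k"
  shows "avail b k x v \<noteq> {}"
proof (cases "v = 0")
  case True then show ?thesis using avail_root_mem[OF assms(1)] by auto
next
  case False
  then have "card (avail b k x v) = k - 1" using card_avail_leaf assms by simp
  then show ?thesis using assms(3) by auto
qed

lemma coupling_supp:
  assumes "max_coupling b k K" "proper_col b k x" "proper_col b k y" "v \<le> b" "2 \<le> k"
    "(c, d) \<in> set_pmf (K t x y v)"
  shows "c \<in> avail b k x v" "d \<in> avail b k y v"
proof -
  have m: "map_pmf fst (K t x y v) = pmf_of_set (avail b k x v)"
          "map_pmf snd (K t x y v) = pmf_of_set (avail b k y v)"
    using assms(1-4) unfolding max_coupling_def by blast+
  have "c \<in> set_pmf (map_pmf fst (K t x y v))" using assms(6) by force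
  then show "c \<in> avail b k x v" unfolding m(1)
    using avail_finite avail_nonempty[OF assms(2,4,5)] by simp
  have "d \<in> set_pmf (map_pmf snd (K t x y v))" using assms(6) by force
  then show "d \<in> avail b k y v" unfolding m(2)
    using avail_finite avail_nonempty[OF assms(3,4,5)] by simp
qed

lemma proper_upd:
  assumes "proper_col b k x" "v \<le> b" "c \<in> avail b k x v"
  shows "proper_col b k (x(v := c))"
  using assms unfolding proper_col_def avail_def star_adj_def by (auto split: if_splits)

lemma leaf_supp:
  assumes "max_coupling b k K" "proper_col b k x" "proper_col b k y" "1 \<le> i" "i \<le> b" "2 \<le> k"
    "(c, d) \<in> set_pmf (K t x y i)" "c \<noteq> d"
  shows "c = y 0 \<and> d = x 0"
proof -
  let ?K = "K t x y i"
  let ?AX = "avail b k x i" and ?AY = "avail b k y i"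
  have cx: "c \<in> ?AX" and dy: "d \<in> ?AY" using coupling_supp assms by (metis (no_types) le_trans)+
  have cardX: "card ?AX = k - 1" and cardY: "card ?AY = k - 1"
    using card_avail_leaf assms by auto
  have kpos: "real (k - 1) > 0" using assms(6) by simp
  have m: "map_pmf fst ?K = pmf_of_set ?AX" "map_pmf snd ?K = pmf_of_set ?AY"
     and diag: "\<forall>e \<in> ?AX \<inter> ?AY. pmf ?K (e, e) = 1 / real (max (card ?AX) (card ?AY))"
    using assms(1-3,5) unfolding max_coupling_def by blast+
  have ne: "?AX \<noteq> {}" "?AY \<noteq> {}" using cx dy by auto
  have pcd: "pmf ?K (c, d) > 0" using assms(7) by (simp add: pmf_positive set_pmf_iff)
  have c1: "c \<notin> ?AY"
  proof
    assume cy: "c \<in> ?AY"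
    have "pmf (map_pmf fst ?K) c = 1 / real (k - 1)"
      unfolding m(1) using cx avail_finite ne cardX by simp
    moreover have "pmf (map_pmf fst ?K) c \<ge> pmf ?K (c, c) + pmf ?K (c, d)"
    proof -
      have "pmf (map_pmf fst ?K) c = measure_pmf.prob ?K (fst -` {c})" by (rule pmf_map)
      also have "\<dots> \<ge> measure_pmf.prob ?K {(c, c), (c, d)}"
        by (rule measure_pmf.finite_measure_mono) auto
      finally show ?thesis using assms(8) by (simp add: measure_measure_pmf_finite)
    qed
    moreover have "pmf ?K (c, c) = 1 / real (k - 1)" using diag cx cy cardX cardY by simp
    ultimately show False using pcd by simp
  qed
  have d1: "d \<notin> ?AX"
  proof
    assume dx: "d \<in> ?AX"
    have "pmf (map_pmf snd ?K) d = 1 / real (k - 1)"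
      unfolding m(2) using dy avail_finite ne cardY by simp
    moreover have "pmf (map_pmf snd ?K) d \<ge> pmf ?K (d, d) + pmf ?K (c, d)"
    proof -
      have "pmf (map_pmf snd ?K) d = measure_pmf.prob ?K (snd -` {d})" by (rule pmf_map)
      also have "\<dots> \<ge> measure_pmf.prob ?K {(d, d), (c, d)}"
        by (rule measure_pmf.finite_measure_mono) auto
      finally show ?thesis using assms(8) by (simp add: measure_measure_pmf_finite)
    qed
    moreover have "pmf ?K (d, d) = 1 / real (k - 1)" using diag dx dy cardX cardY by simp
    ultimately show False using pcd by simp
  qed
  show ?thesis using c1 d1 cx dy avail_leaf[OF assms(4,5)] by auto
qed



definition propS :: "nat \<Rightarrow> nat \<Rightarrow> (nat \<Rightarrow> nat) \<times> (nat \<Rightarrow> nat) \<Rightarrow> bool" where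
  "propS b k s \<longleftrightarrow> proper_col b k (fst s) \<and> proper_col b k (snd s)"

lemma step_expand:
  "coupled_step b K t s = bind_pmf (pmf_of_set {..b}) (\<lambda>v.
       map_pmf (\<lambda>cd. ((fst s)(v := fst cd), (snd s)(v := snd cd))) (K t (fst s) (snd s) v))"
  unfolding coupled_step_def by (simp add: case_prod_beta')

lemma step_supp:
  assumes "max_coupling b k K" "2 \<le> k" "propS b k s" "s' \<in> set_pmf (coupled_step b K t s)"
  shows "propS b k s'"
proof -
  obtain v c d where v: "v \<le> b" and cd: "(c, d) \<in> set_pmf (K t (fst s) (snd s) v)"
    and s': "s' = ((fst s)(v := c), (snd s)(v := d))"
    using assms(4) unfolding step_expand set_bind_pmf set_map_pmf by auto
  have p: "proper_col b k (fst s)" "proper_col b k (snd s)" using assms(3) unfolding propS_def by auto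
  have a: "c \<in> avail b k (fst s) v" "d \<in> avail b k (snd s) v"
    using coupling_supp[where K=K and t=t and x="fst s" and y="snd s" and v=v and c=c and d=d] assms(1,2) p v cd by auto
  show ?thesis unfolding propS_def s' using proper_upd[OF p(1) v a(1)] proper_upd[OF p(2) v a(2)] by simp
qed

lemma dist_supp:
  assumes "max_coupling b k K" "2 \<le> k" "propS b k (x0, y0)"
  shows "s \<in> set_pmf (coupled_dist b K x0 y0 n) \<Longrightarrow> propS b k s"
proof (induction n arbitrary: s)
  case 0 then show ?case using assms by simp
next
  case (Suc n)
  then obtain s0 where "s0 \<in> set_pmf (coupled_dist b K x0 y0 n)" "s \<in> set_pmf (coupled_step b K n s0)"
    by auto
  then show ?case using Suc.IH step_supp assms by blast
qed

lemma dist_shift: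
  "coupled_dist b K x0 y0 (n + m) =
     bind_pmf (coupled_dist b K x0 y0 n) (\<lambda>s. coupled_dist b (\<lambda>t. K (t + n)) (fst s) (snd s) m)"
proof (induction m)
  case 0 then show ?case by (simp add: bind_return_pmf')
next
  case (Suc m)
  have st: "coupled_step b (\<lambda>t. K (t + n)) m = coupled_step b K (n + m)"
    by (rule ext) (simp add: coupled_step_def add.commute)
  have "coupled_dist b K x0 y0 (n + Suc m) = bind_pmf (coupled_dist b K x0 y0 (n + m)) (coupled_step b K (n + m))"
    by simp
  also have "\<dots> = bind_pmf (coupled_dist b K x0 y0 n) (\<lambda>s. bind_pmf (coupled_dist b (\<lambda>t. K (t + n)) (fst s) (snd s) m) (coupled_step b K (n + m)))"
    unfolding Suc by (rule bind_assoc_pmf)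
  also have "\<dots> = bind_pmf (coupled_dist b K x0 y0 n) (\<lambda>s. coupled_dist b (\<lambda>t. K (t + n)) (fst s) (snd s) (Suc m))"
    unfolding st[symmetric] by simp
  finally show ?case .
qed

lemma dist_one:
  "coupled_dist b K x y (Suc m) =
     bind_pmf (coupled_step b K 0 (x, y)) (\<lambda>s. coupled_dist b (\<lambda>t. K (t + 1)) (fst s) (snd s) m)"
proof -
  have o: "coupled_dist b K x y 1 = coupled_step b K 0 (x, y)"
    using coupled_dist.simps(2)[of b K x y 0] by (simp add: bind_return_pmf)
  have "Suc m = 1 + m" by simp
  then show ?thesis using dist_shift[of b K x y 1 m] o by simp
qed

lemma max_coupling_shift: "max_coupling b k K \<Longrightarrow> max_coupling b k (\<lambda>t. K (t + n))"
  unfolding max_coupling_def by blast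



definition good :: "nat \<Rightarrow> (nat \<Rightarrow> nat) \<times> (nat \<Rightarrow> nat) \<Rightarrow> bool" where
  "good b s \<longleftrightarrow> (\<forall>i\<in>{1..b}. fst s i \<noteq> snd s i \<longrightarrow> fst s i = snd s 0 \<and> snd s i = fst s 0)"

definition bad :: "nat \<Rightarrow> (nat \<Rightarrow> nat) \<times> (nat \<Rightarrow> nat) \<Rightarrow> nat set" where
  "bad b s = {i\<in>{1..b}. fst s i \<noteq> snd s i \<and> \<not> (fst s i = snd s 0 \<and> snd s i = fst s 0)}"

definition dis :: "nat \<Rightarrow> (nat \<Rightarrow> nat) \<times> (nat \<Rightarrow> nat) \<Rightarrow> nat set" where
  "dis b s = {i\<in>{1..b}. fst s i \<noteq> snd s i}"

lemma bad_finite: "finite (bad b s)" unfolding bad_def by auto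
lemma dis_finite: "finite (dis b s)" unfolding dis_def by auto
lemma bad_sub: "bad b s \<subseteq> {1..b}" unfolding bad_def by auto
lemma dis_sub: "dis b s \<subseteq> {1..b}" unfolding dis_def by auto
lemma bad_dis: "bad b s \<subseteq> dis b s" unfolding bad_def dis_def by auto
lemma card_bad_le: "card (bad b s) \<le> b"
  using card_mono[OF _ bad_sub, of b s] by simp
lemma card_dis_le: "card (dis b s) \<le> b"
  using card_mono[OF _ dis_sub, of b s] by simp
lemma good_bad: "good b s \<longleftrightarrow> bad b s = {}"
  unfolding good_def bad_def by auto

lemma bad_upd_leaf:
  assumes "max_coupling b k K" "2 \<le> k" "propS b k s" "1 \<le> i" "i \<le> b"
    "(c, d) \<in> set_pmf (K t (fst s) (snd s) i)"
  shows "bad b ((fst s)(i := c), (snd s)(i := d)) \<subseteq> bad b s - {i}"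
proof -
  have p: "proper_col b k (fst s)" "proper_col b k (snd s)" using assms(3) unfolding propS_def by auto
  have cd: "c \<noteq> d \<Longrightarrow> c = snd s 0 \<and> d = fst s 0"
    using leaf_supp[where K=K and t=t and x="fst s" and y="snd s" and i=i and c=c and d=d] assms p by blast
  have i0: "i \<noteq> 0" using assms(4) by simp
  show ?thesis unfolding bad_def using cd i0 by auto
qed

lemma dis_upd_leaf:
  assumes "max_coupling b k K" "2 \<le> k" "propS b k s" "1 \<le> i" "i \<le> b"
    "(c, d) \<in> set_pmf (K t (fst s) (snd s) i)"
  shows "dis b ((fst s)(i := c), (snd s)(i := d)) \<subseteq> insert i (dis b s - {i})"
  unfolding dis_def using assms by auto

lemma dis_upd_leaf':
  assumes "max_coupling b k K" "2 \<le> k" "propS b k s" "1 \<le> i" "i \<le> b"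
    "(c, d) \<in> set_pmf (K t (fst s) (snd s) i)"
  shows "real (card (dis b ((fst s)(i := c), (snd s)(i := d)))) \<le> real (card (dis b s - {i})) + (if c = snd s 0 then 1 else 0)"
proof -
  have p: "proper_col b k (fst s)" "proper_col b k (snd s)" using assms(3) unfolding propS_def by auto
  have cd: "c \<noteq> d \<Longrightarrow> c = snd s 0 \<and> d = fst s 0"
    using leaf_supp[where K=K and t=t and x="fst s" and y="snd s" and i=i and c=c and d=d] assms p by blast
  have i0: "i \<noteq> 0" using assms(4) by simp
  show ?thesis
  proof (cases "c = snd s 0")
    case True
    have "card (dis b ((fst s)(i := c), (snd s)(i := d))) \<le> card (insert i (dis b s - {i}))"
      by (rule card_mono) (use dis_upd_leaf[OF assms] dis_finite in auto)
    also have "\<dots> \<le> card (dis b s - {i}) + 1" by (subst card_insert_disjoint) (auto simp: dis_finite)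
    finally show ?thesis using True by simp
  next
    case False
    then have "c = d" using cd by blast
    then have "dis b ((fst s)(i := c), (snd s)(i := d)) \<subseteq> dis b s - {i}" unfolding dis_def using i0 by auto
    then have "card (dis b ((fst s)(i := c), (snd s)(i := d))) \<le> card (dis b s - {i})"
      by (rule card_mono[rotated]) (simp add: dis_finite)
    then show ?thesis using False by simp
  qed
qed

lemma dis_upd_root: "dis b ((fst s)(0 := c), (snd s)(0 := d)) = dis b s"
  unfolding dis_def by auto


lemma prob_step_sum:
  fixes P :: "(nat \<Rightarrow> nat) \<times> (nat \<Rightarrow> nat) \<Rightarrow> real"
  assumes "\<And>s. \<bar>P s\<bar> \<le> B"
  shows "(\<integral>s'. P s' \<partial>measure_pmf (coupled_step b K t s)) =
    (\<Sum>v\<in>{..b}. (\<integral>cd. P ((fst s)(v := fst cd), (snd s)(v := snd cd)) \<partial>measure_pmf (K t (fst s) (snd s) v))) / real (b + 1)"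
proof -
  have "(\<integral>s'. P s' \<partial>measure_pmf (coupled_step b K t s)) =
     (\<integral>v. (\<integral>s'. P s' \<partial>measure_pmf (map_pmf (\<lambda>cd. ((fst s)(v := fst cd), (snd s)(v := snd cd))) (K t (fst s) (snd s) v))) \<partial>measure_pmf (pmf_of_set {..b}))"
    unfolding step_expand by (rule integral_bind_pmf_bdd[where B=B]) (rule assms)
  also have "\<dots> = (\<Sum>v\<in>{..b}. (\<integral>s'. P s' \<partial>measure_pmf (map_pmf (\<lambda>cd. ((fst s)(v := fst cd), (snd s)(v := snd cd))) (K t (fst s) (snd s) v)))) / real (card {..b})"
    by (rule integral_pmf_of_set) auto
  finally show ?thesis by simp
qed

lemma alg_aux: "(B * Q - C * \<beta> * R) / (D::real) = B / D * Q - \<beta> * (C / D * R)"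
  by (simp add: diff_divide_distrib)
lemma alg_aux2:
  shows "(B * (B / (B + 1)) ^ m - (B - 1) * \<beta> * ((B - 1) / (B + 1)) ^ m) / (B + 1) = (B / (B + 1)) ^ Suc m - \<beta> * ((B - 1) / ((B::real) + 1)) ^ Suc m"
  unfolding power_Suc by (rule alg_aux)

lemma claim1:
  assumes "max_coupling b k K" "2 \<le> k" "1 \<le> b" "propS b k s"
  shows "measure_pmf.prob (coupled_dist b K (fst s) (snd s) m) {s. good b s}
     \<ge> (real b / (real b + 1)) ^ m - real (card (bad b s)) * ((real b - 1) / (real b + 1)) ^ m"
  using assms
proof (induction m arbitrary: K s)
  case 0
  show ?case
  proof (cases "bad b s = {}")
    case True
    then show ?thesis by (simp add: good_bad)
  next
    case False
    then have "card (bad b s) \<ge> 1" using bad_finite by (simp add: Suc_le_eq card_gt_0_iff)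
    then show ?thesis by (auto simp: indicator_def)
  qed
next
  case (Suc m)
  let ?q = "real b / (real b + 1)" and ?r = "(real b - 1) / (real b + 1)"
  let ?K1 = "\<lambda>t. K (t + 1)"
  define P where "P = (\<lambda>s'. measure_pmf.prob (coupled_dist b ?K1 (fst s') (snd s') m) {s. good b s})"
  have mc1: "max_coupling b k ?K1" using max_coupling_shift[OF Suc.prems(1)] .
  have Pb: "\<bar>P s'\<bar> \<le> 1" for s' unfolding P_def by simp
  have q01: "0 \<le> ?q" "?q \<le> 1" and r01: "0 \<le> ?r" "?r \<le> 1" using Suc.prems(3) by auto
  have "measure_pmf.prob (coupled_dist b K (fst s) (snd s) (Suc m)) {s. good b s}
      = (\<integral>s'. P s' \<partial>measure_pmf (coupled_step b K 0 (fst s, snd s)))"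
    unfolding dist_one P_def by (rule prob_bind_pmf)
  also have "\<dots> = (\<Sum>v\<in>{..b}. (\<integral>cd. P ((fst s)(v := fst cd), (snd s)(v := snd cd)) \<partial>measure_pmf (K 0 (fst s) (snd s) v))) / real (b + 1)"
    using prob_step_sum[where P=P and B=1, OF Pb, of b K 0 "(fst s, snd s)"] by simp
  finally have eq: "measure_pmf.prob (coupled_dist b K (fst s) (snd s) (Suc m)) {s. good b s} =
     (\<Sum>v\<in>{..b}. (\<integral>cd. P ((fst s)(v := fst cd), (snd s)(v := snd cd)) \<partial>measure_pmf (K 0 (fst s) (snd s) v))) / real (b + 1)" .
  define G where "G = (\<lambda>v::nat. if v = 0 then 0 else ?q ^ m - real (card (bad b s - {v})) * ?r ^ m)"
  have FG: "G v \<le> (\<integral>cd. P ((fst s)(v := fst cd), (snd s)(v := snd cd)) \<partial>measure_pmf (K 0 (fst s) (snd s) v))"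
    if v: "v \<le> b" for v
  proof (cases "v = 0")
    case True
    then show ?thesis unfolding G_def P_def by (simp add: integral_nonneg_AE)
  next
    case False
    have Gb: "\<bar>G v\<bar> \<le> real b + 1"
    proof -
      have "real (card (bad b s - {v})) \<le> real b"
        using card_mono[OF _ Diff_subset, of "bad b s" "{v}"] card_bad_le[of b s] bad_finite by simp
      moreover have "0 \<le> ?q ^ m" "?q ^ m \<le> 1" "0 \<le> ?r ^ m" "?r ^ m \<le> 1"
        using q01 r01 by (auto simp: power_le_one)
      ultimately have "real (card (bad b s - {v})) * ?r ^ m \<le> real b"
        using mult_left_le[of "?r ^ m" "real (card (bad b s - {v}))"] by linarith
      moreover have "0 \<le> real (card (bad b s - {v})) * ?r ^ m" using \<open>0 \<le> ?r ^ m\<close> by simp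
      moreover have "G v = ?q ^ m - real (card (bad b s - {v})) * ?r ^ m" unfolding G_def using False by simp
      ultimately show ?thesis using \<open>0 \<le> ?q ^ m\<close> \<open>?q ^ m \<le> 1\<close>
        unfolding abs_le_iff by linarith
    qed
    have "(\<integral>cd. G v \<partial>measure_pmf (K 0 (fst s) (snd s) v)) \<le> (\<integral>cd. P ((fst s)(v := fst cd), (snd s)(v := snd cd)) \<partial>measure_pmf (K 0 (fst s) (snd s) v))"
    proof (rule integral_mono_pmf[where B="real b + 1"])
      fix cd assume cd: "cd \<in> set_pmf (K 0 (fst s) (snd s) v)"
      obtain c d where cdd: "cd = (c, d)" by (cases cd)
      have cdm: "(c, d) \<in> set_pmf (K 0 (fst s) (snd s) v)" using cd cdd by simp
      have p: "proper_col b k (fst s)" "proper_col b k (snd s)" using Suc.prems(4) unfolding propS_def by auto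
      have a: "c \<in> avail b k (fst s) v" "d \<in> avail b k (snd s) v"
        using coupling_supp[where K=K and t=0 and x="fst s" and y="snd s" and v=v and c=c and d=d] Suc.prems(1,2) p v cdm by auto
      have ps: "propS b k ((fst s)(v := c), (snd s)(v := d))"
        unfolding propS_def using proper_upd[OF p(1) v a(1)] proper_upd[OF p(2) v a(2)] by simp
      have IH: "P ((fst s)(v := c), (snd s)(v := d)) \<ge> ?q ^ m - real (card (bad b ((fst s)(v := c), (snd s)(v := d)))) * ?r ^ m"
        using Suc.IH[OF mc1 Suc.prems(2,3) ps] unfolding P_def by (simp only: fst_conv snd_conv)
      have sub: "bad b ((fst s)(v := c), (snd s)(v := d)) \<subseteq> bad b s - {v}"
        using bad_upd_leaf[where K=K and t=0 and s=s and i=v and c=c and d=d] Suc.prems(1,2,4) False v cdm by auto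
      have "card (bad b ((fst s)(v := c), (snd s)(v := d))) \<le> card (bad b s - {v})"
        by (rule card_mono[OF _ sub]) (simp add: bad_finite)
      then have "real (card (bad b ((fst s)(v := c), (snd s)(v := d)))) * ?r ^ m \<le> real (card (bad b s - {v})) * ?r ^ m"
        using r01 by (intro mult_right_mono) auto
      then show "G v \<le> P ((fst s)(v := fst cd), (snd s)(v := snd cd))"
        using IH False unfolding G_def cdd by simp
    next
      show "\<bar>G v\<bar> \<le> real b + 1" for y :: "nat \<times> nat" by (rule Gb)
    next
      show "\<bar>P ((fst s)(v := fst y), (snd s)(v := snd y))\<bar> \<le> real b + 1" for y
        using Pb[of "((fst s)(v := fst y), (snd s)(v := snd y))"] by simp
    qed
    then show ?thesis by simp
  qed
  have sumG: "(\<Sum>v\<in>{..b}. G v) = real b * ?q ^ m - (real b - 1) * real (card (bad b s)) * ?r ^ m"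
  proof -
    have ins: "{..b} = insert 0 {1..b}" by auto
    have "(\<Sum>v\<in>{..b}. G v) = (\<Sum>v\<in>{1..b}. G v)" unfolding ins by (simp add: G_def)
    also have "\<dots> = (\<Sum>v\<in>{1..b}. ?q ^ m - (real (card (bad b s)) - (if v \<in> bad b s then 1 else 0)) * ?r ^ m)"
    proof (rule sum.cong[OF refl])
      fix v assume v: "v \<in> {1..b}"
      show "G v = ?q ^ m - (real (card (bad b s)) - (if v \<in> bad b s then 1 else 0)) * ?r ^ m"
      proof (cases "v \<in> bad b s")
        case True
        then have c1: "card (bad b s) \<ge> 1" using bad_finite[of b s] card_gt_0_iff
          by (metis One_nat_def Suc_leI empty_iff)
        have "real (card (bad b s - {v})) = real (card (bad b s)) - 1"
          using card_Diff_singleton[OF True] c1 by (simp add: of_nat_diff)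
        then show ?thesis unfolding G_def using True v by simp
      next
        case False
        then have "bad b s - {v} = bad b s" by auto
        then show ?thesis unfolding G_def using False v by simp
      qed
    qed
    also have "\<dots> = real b * ?q ^ m - (real b * real (card (bad b s)) - (\<Sum>v\<in>{1..b}. (if v \<in> bad b s then 1 else 0))) * ?r ^ m"
      by (simp add: sum_subtractf sum_distrib_right[symmetric] left_diff_distrib)
    also have "(\<Sum>v\<in>{1..b}. (if v \<in> bad b s then 1 else 0 :: real)) = real (card (bad b s))"
    proof -
      have "(\<Sum>v\<in>{1..b}. (if v \<in> bad b s then 1 else 0 :: real)) = real (card ({1..b} \<inter> bad b s))"
        by (simp add: sum.If_cases)
      also have "{1..b} \<inter> bad b s = bad b s" using bad_sub[of b s] by blast
      finally show ?thesis .
    qed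
    finally show ?thesis by (simp add: algebra_simps)
  qed
  have "(\<Sum>v\<in>{..b}. G v) / real (b + 1) \<le> measure_pmf.prob (coupled_dist b K (fst s) (snd s) (Suc m)) {s. good b s}"
    unfolding eq by (intro divide_right_mono sum_mono FG) auto
  moreover have "(\<Sum>v\<in>{..b}. G v) / real (b + 1) = ?q ^ Suc m - real (card (bad b s)) * ?r ^ Suc m"
    unfolding sumG of_nat_Suc[symmetric] using alg_aux2[of "real b" m "real (card (bad b s))"] by (simp add: add.commute)
  ultimately show ?case by simp
qed


lemma leaf_prob_dis:
  assumes "max_coupling b k K" "2 \<le> k" "propS b k s" "1 \<le> i" "i \<le> b"
  shows "measure_pmf.prob (K t (fst s) (snd s) i) {cd. fst cd = snd s 0} \<le> 1 / real (k - 1)"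
proof -
  have p: "proper_col b k (fst s)" "proper_col b k (snd s)" using assms(3) unfolding propS_def by auto
  have m: "map_pmf fst (K t (fst s) (snd s) i) = pmf_of_set (avail b k (fst s) i)"
    using assms(1,5) p unfolding max_coupling_def by blast
  have ne: "avail b k (fst s) i \<noteq> {}" using avail_nonempty[OF p(1) assms(5,2)] .
  have "measure_pmf.prob (K t (fst s) (snd s) i) {cd. fst cd = snd s 0}
      = measure_pmf.prob (map_pmf fst (K t (fst s) (snd s) i)) {snd s 0}"
    by (simp add: vimage_def)
  also have "\<dots> = pmf (pmf_of_set (avail b k (fst s) i)) (snd s 0)" unfolding m measure_pmf_single ..
  also have "\<dots> \<le> 1 / real (card (avail b k (fst s) i))"
    using ne avail_finite by (simp add: indicator_def)
  also have "card (avail b k (fst s) i) = k - 1" using card_avail_leaf[OF p(1) assms(4,5)] .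
  finally show ?thesis .
qed

lemma step_dis:
  assumes "max_coupling b k K" "2 \<le> k" "1 \<le> b" "propS b k s"
  shows "(\<integral>s'. real (card (dis b s')) \<partial>measure_pmf (coupled_step b K t s))
    \<le> real b / (real b + 1) * real (card (dis b s)) + real b / ((real b + 1) * real (k - 1))"
proof -
  let ?P = "\<lambda>s'. real (card (dis b s'))"
  let ?F = "\<lambda>v. (\<integral>cd. ?P ((fst s)(v := fst cd), (snd s)(v := snd cd)) \<partial>measure_pmf (K t (fst s) (snd s) v))"
  have Pb: "\<bar>?P s'\<bar> \<le> real b" for s' using card_dis_le[of b s'] by simp
  have eq: "(\<integral>s'. ?P s' \<partial>measure_pmf (coupled_step b K t s)) = (\<Sum>v\<in>{..b}. ?F v) / real (b + 1)"
    by (rule prob_step_sum[where B="real b", OF Pb])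
  define G where "G = (\<lambda>v::nat. if v = 0 then real (card (dis b s)) else real (card (dis b s - {v})) + 1 / real (k - 1))"
  have FG: "?F v \<le> G v" if v: "v \<le> b" for v
  proof (cases "v = 0")
    case True
    then show ?thesis unfolding G_def using dis_upd_root[of b s] by simp
  next
    case False
    let ?M = "measure_pmf (K t (fst s) (snd s) v)"
    have int1: "integrable ?M (\<lambda>cd. indicator {cd. fst cd = snd s 0} cd :: real)"
      by (rule measure_pmf.integrable_const_bound[where B=1]) auto
    have "?F v \<le> (\<integral>cd. real (card (dis b s - {v})) + indicator {cd. fst cd = snd s 0} cd \<partial>?M)"
    proof (rule integral_mono_pmf[where B="real b + 1"])
      fix cd assume cd: "cd \<in> set_pmf (K t (fst s) (snd s) v)"
      obtain c d where cdd: "cd = (c, d)" by (cases cd)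
      show "?P ((fst s)(v := fst cd), (snd s)(v := snd cd)) \<le> real (card (dis b s - {v})) + indicator {cd. fst cd = snd s 0} cd"
        using dis_upd_leaf'[where K=K and t=t and s=s and i=v and c=c and d=d] assms(1,2,4) False v cd cdd
        by (auto simp: indicator_def)
    next
      show "\<bar>?P ((fst s)(v := fst y), (snd s)(v := snd y))\<bar> \<le> real b + 1" for y
        using Pb[of "((fst s)(v := fst y), (snd s)(v := snd y))"] by simp
    next
      fix y
      have "real (card (dis b s - {v})) \<le> real b"
        using card_mono[OF _ Diff_subset, of "dis b s" "{v}"] card_dis_le[of b s] dis_finite by simp
      then show "\<bar>real (card (dis b s - {v})) + indicator {cd. fst cd = snd s 0} y\<bar> \<le> real b + 1"
        by (auto simp: indicator_def)
    qed
    also have "\<dots> = real (card (dis b s - {v})) + measure_pmf.prob (K t (fst s) (snd s) v) {cd. fst cd = snd s 0}"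
      using int1 by (simp add: Bochner_Integration.integral_add)
    also have "\<dots> \<le> G v" unfolding G_def using False leaf_prob_dis[OF assms(1,2,4), of v t] v by simp
    finally show ?thesis .
  qed
  have sumG: "(\<Sum>v\<in>{..b}. G v) = real b * real (card (dis b s)) + real b / real (k - 1)"
  proof -
    have ins: "{..b} = insert 0 {1..b}" by auto
    have "(\<Sum>v\<in>{..b}. G v) = real (card (dis b s)) + (\<Sum>v\<in>{1..b}. G v)" unfolding ins by (simp add: G_def)
    also have "(\<Sum>v\<in>{1..b}. G v) = (\<Sum>v\<in>{1..b}. real (card (dis b s)) - (if v \<in> dis b s then 1 else 0) + 1 / real (k - 1))"
    proof (rule sum.cong[OF refl])
      fix v assume v: "v \<in> {1..b}"
      show "G v = real (card (dis b s)) - (if v \<in> dis b s then 1 else 0) + 1 / real (k - 1)"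
      proof (cases "v \<in> dis b s")
        case True
        then have c1: "card (dis b s) \<ge> 1" using dis_finite[of b s] card_gt_0_iff
          by (metis One_nat_def Suc_leI empty_iff)
        have "real (card (dis b s - {v})) = real (card (dis b s)) - 1"
          using card_Diff_singleton[OF True] c1 by (simp add: of_nat_diff)
        then show ?thesis unfolding G_def using True v by simp
      next
        case False
        then have "dis b s - {v} = dis b s" by auto
        then show ?thesis unfolding G_def using False v by simp
      qed
    qed
    also have "\<dots> = real b * real (card (dis b s)) - (\<Sum>v\<in>{1..b}. (if v \<in> dis b s then 1 else 0)) + real b / real (k - 1)"
      by (simp add: sum.distrib sum_subtractf)
    also have "(\<Sum>v\<in>{1..b}. (if v \<in> dis b s then 1 else 0 :: real)) = real (card (dis b s))"
    proof -
      have "(\<Sum>v\<in>{1..b}. (if v \<in> dis b s then 1 else 0 :: real)) = real (card ({1..b} \<inter> dis b s))"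
        by (simp add: sum.If_cases)
      also have "{1..b} \<inter> dis b s = dis b s" using dis_sub[of b s] by blast
      finally show ?thesis .
    qed
    finally show ?thesis by simp
  qed
  have "(\<integral>s'. ?P s' \<partial>measure_pmf (coupled_step b K t s)) \<le> (\<Sum>v\<in>{..b}. G v) / real (b + 1)"
    unfolding eq by (intro divide_right_mono sum_mono FG) auto
  also have "\<dots> = real b / (real b + 1) * real (card (dis b s)) + real b / ((real b + 1) * real (k - 1))"
    unfolding sumG by (simp add: add_divide_distrib add.commute mult.commute)
  finally show ?thesis .
qed

lemma alg_aux3: assumes "(K1::real) > 0" "B \<ge> 0" shows "B / (B + 1) * (B / K1) + B / ((B + 1) * K1) = B / K1"
proof -
  have h: "K1 + B * K1 > 0" "B + 1 > 0" using assms by (auto simp: add_pos_nonneg)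
  have "B / (B + 1) * (B / K1) + B / ((B + 1) * K1) = (B * B + B) / ((B + 1) * K1)"
    by (simp add: add_divide_distrib)
  also have "(B * B + B) = B * (B + 1)" by (simp add: algebra_simps)
  also have "B * (B + 1) / ((B + 1) * K1) = B / K1" using h by simp
  finally show ?thesis .
qed

lemma claim2:
  assumes "max_coupling b k K" "2 \<le> k" "1 \<le> b" "propS b k (x0, y0)"
  shows "(\<integral>s. real (card (dis b s)) \<partial>measure_pmf (coupled_dist b K x0 y0 n))
    \<le> (real b / (real b + 1)) ^ n * real b + real b / real (k - 1)"
proof (induction n)
  case 0
  have "real (card (dis b (x0, y0))) \<le> real b" using card_dis_le by simp
  moreover have "0 \<le> real b / real (k - 1)" by simp
  ultimately have "real (card (dis b (x0, y0))) \<le> real b + real b / real (k - 1)" by (metis add_increasing2)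
  then show ?case by simp
next
  case (Suc n)
  let ?q = "real b / (real b + 1)"
  let ?c = "real b / ((real b + 1) * real (k - 1))"
  have "(\<integral>s. real (card (dis b s)) \<partial>measure_pmf (coupled_dist b K x0 y0 (Suc n)))
      = (\<integral>s. (\<integral>s'. real (card (dis b s')) \<partial>measure_pmf (coupled_step b K n s)) \<partial>measure_pmf (coupled_dist b K x0 y0 n))"
    unfolding coupled_dist.simps
    by (rule integral_bind_pmf_bdd[where B="real b"]) (use card_dis_le in simp)
  also have "\<dots> \<le> (\<integral>s. ?q * real (card (dis b s)) + ?c \<partial>measure_pmf (coupled_dist b K x0 y0 n))"
  proof (rule integral_mono_pmf[where B="real b + real b"])
    fix s assume "s \<in> set_pmf (coupled_dist b K x0 y0 n)"
    then have "propS b k s" using dist_supp[OF assms(1,2,4)] by blast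
    then show "(\<integral>s'. real (card (dis b s')) \<partial>measure_pmf (coupled_step b K n s)) \<le> ?q * real (card (dis b s)) + ?c"
      using step_dis[OF assms(1-3)] by blast
  next
    fix y
    have "0 \<le> (\<integral>s'. real (card (dis b s')) \<partial>measure_pmf (coupled_step b K n y))" by simp
    moreover have "(\<integral>s'. real (card (dis b s')) \<partial>measure_pmf (coupled_step b K n y)) \<le> (\<integral>s'. real b \<partial>measure_pmf (coupled_step b K n y))"
      by (rule integral_mono_pmf[where B="real b"]) (use card_dis_le in auto)
    ultimately show "\<bar>\<integral>s'. real (card (dis b s')) \<partial>measure_pmf (coupled_step b K n y)\<bar> \<le> real b + real b" by simp
  next
    fix y
    have "?q \<le> 1" by simp
    have "?c \<le> real b"
    proof -
      have k1: "1 \<le> real (k - 1)" using assms(2) by simp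
      have "1 * 1 \<le> (real b + 1) * real (k - 1)"
        by (rule mult_mono) (use k1 in auto)
      define D where "D = (real b + 1) * real (k - 1)"
      have D1: "1 \<le> D" using \<open>1 * 1 \<le> (real b + 1) * real (k - 1)\<close> unfolding D_def by (simp only: mult_1)
      have "real b / D \<le> real b / 1"
        by (rule divide_left_mono) (use D1 in auto)
      then show ?thesis unfolding D_def by (simp only: div_by_1)
    qed
    moreover have "?q * real (card (dis b y)) \<le> real b"
      using mult_mono[OF \<open>?q \<le> 1\<close> card_dis_le[of b y, THEN of_nat_mono]] by simp
    moreover have "0 \<le> ?c" "0 \<le> ?q * real (card (dis b y))" by auto
    ultimately show "\<bar>?q * real (card (dis b y)) + ?c\<bar> \<le> real b + real b" by simp
  qed
  also have "\<dots> = ?q * (\<integral>s. real (card (dis b s)) \<partial>measure_pmf (coupled_dist b K x0 y0 n)) + ?c"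
  proof -
    have int: "integrable (measure_pmf (coupled_dist b K x0 y0 n)) (\<lambda>s. real (card (dis b s)))"
      by (rule measure_pmf.integrable_const_bound[where B="real b"]) (use card_dis_le in auto)
    show ?thesis using int by simp
  qed
  also have "\<dots> \<le> ?q * ((real b / (real b + 1)) ^ n * real b + real b / real (k - 1)) + ?c"
    using Suc.IH by (intro add_right_mono mult_left_mono) auto
  also have "\<dots> = ?q ^ Suc n * real b + real b / real (k - 1)"
  proof -
    have "?q * (real b / real (k - 1)) + ?c = real b / real (k - 1)"
      using alg_aux3[of "real (k - 1)" "real b"] assms(2) by simp
    then show ?thesis by (simp add: algebra_simps)
  qed
  finally show ?case .
qed


lemma main_prob:
  assumes "max_coupling b k K" "2 \<le> k" "1 \<le> b" "propS b k (x0, y0)"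
  shows "measure_pmf.prob (coupled_dist b K x0 y0 (n + m)) {s. good b s}
    \<ge> (real b / (real b + 1)) ^ m - ((real b - 1) / (real b + 1)) ^ m * ((real b / (real b + 1)) ^ n * real b + real b / real (k - 1))"
proof -
  let ?q = "real b / (real b + 1)" and ?r = "(real b - 1) / (real b + 1)"
  let ?K = "\<lambda>t. K (t + n)"
  let ?D = "coupled_dist b K x0 y0 n"
  define P where "P = (\<lambda>s. measure_pmf.prob (coupled_dist b ?K (fst s) (snd s) m) {s. good b s})"
  have r01: "0 \<le> ?r ^ m" "?r ^ m \<le> 1" and q01: "0 \<le> ?q ^ m" "?q ^ m \<le> 1"
    using assms(3) by (auto simp: power_le_one)
  have "measure_pmf.prob (coupled_dist b K x0 y0 (n + m)) {s. good b s} = (\<integral>s. P s \<partial>measure_pmf ?D)"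
    unfolding dist_shift P_def by (rule prob_bind_pmf)
  also have "\<dots> \<ge> (\<integral>s. ?q ^ m - real (card (dis b s)) * ?r ^ m \<partial>measure_pmf ?D)"
  proof (rule integral_mono_pmf[where B="real b + 1"])
    fix s assume "s \<in> set_pmf ?D"
    then have ps: "propS b k s" using dist_supp[OF assms(1,2,4)] by blast
    have c1: "P s \<ge> ?q ^ m - real (card (bad b s)) * ?r ^ m"
      unfolding P_def by (rule claim1[OF max_coupling_shift[OF assms(1)] assms(2,3) ps])
    have "card (bad b s) \<le> card (dis b s)" by (rule card_mono[OF dis_finite bad_dis])
    then have "real (card (bad b s)) * ?r ^ m \<le> real (card (dis b s)) * ?r ^ m"
      using r01 by (intro mult_right_mono) auto
    then show "?q ^ m - real (card (dis b s)) * ?r ^ m \<le> P s" using c1 by linarith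
  next
    fix y
    have "P y \<le> 1" unfolding P_def by (rule measure_pmf.prob_le_1)
    moreover have "0 \<le> P y" unfolding P_def by simp
    ultimately show "\<bar>P y\<bar> \<le> real b + 1" by simp
  next
    fix y
    have "real (card (dis b y)) * ?r ^ m \<le> real b * 1"
      using r01 card_dis_le[of b y] by (intro mult_mono) auto
    moreover have "0 \<le> real (card (dis b y)) * ?r ^ m" using r01 by simp
    ultimately show "\<bar>?q ^ m - real (card (dis b y)) * ?r ^ m\<bar> \<le> real b + 1"
      using q01 unfolding abs_le_iff by linarith
  qed
  also have "(\<integral>s. ?q ^ m - real (card (dis b s)) * ?r ^ m \<partial>measure_pmf ?D)
      = ?q ^ m - ?r ^ m * (\<integral>s. real (card (dis b s)) \<partial>measure_pmf ?D)"
  proof -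
    have int: "integrable (measure_pmf ?D) (\<lambda>s. real (card (dis b s)))"
      by (rule measure_pmf.integrable_const_bound[where B="real b"]) (use card_dis_le in auto)
    have int2: "integrable (measure_pmf ?D) (\<lambda>s. real (card (dis b s)) * ?r ^ m)"
      using int by simp
    show ?thesis using int int2 by (simp add: mult.commute)
  qed
  also have "\<dots> \<ge> ?q ^ m - ?r ^ m * (?q ^ n * real b + real b / real (k - 1))"
    using claim2[OF assms, of n] r01 by (intro diff_left_mono mult_left_mono) auto
  finally show ?thesis .
qed



lemma exp_pow_le: "(x::real) \<le> exp y \<Longrightarrow> 0 \<le> x \<Longrightarrow> x ^ n \<le> exp (real n * y)"
  by (simp add: exp_of_nat_mult power_mono)

lemma exp_pow_ge: "exp y \<le> (x::real) \<Longrightarrow> exp (real n * y) \<le> x ^ n"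
  by (simp add: exp_of_nat_mult power_mono)

lemma analytic_core:
  fixes B L m n kk :: real and M N :: nat
  assumes B: "B \<ge> 3 ^ 20" and L: "L = ln B"
    and kk: "kk > B / L - 2"
    and n: "real N \<ge> 4 * (B + 1) * L"
    and m1: "real M \<ge> 2 * B * ln L - 1" and m2: "real M \<le> 2 * B * ln L + 1"
  shows "(B / (B + 1)) ^ M - ((B - 1) / (B + 1)) ^ M * ((B / (B + 1)) ^ N * B + B / kk) \<ge> 1 / (2 * L\<^sup>2)"
proof -
  have Bpos: "B > 0" using B by simp
  have B100: "B \<ge> 100" using B by simp
  have Bn: "B \<noteq> 0" "B + 1 \<noteq> 0" "B + 1 > 0" "B * B + B \<noteq> 0" "B + B * B \<noteq> 0" using Bpos by (auto simp: add_pos_pos) (smt (verit) mult_pos_pos)+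
  have e1: "exp (real 20 * 1) = exp 1 ^ 20" by (rule exp_of_nat_mult)
  have e2: "exp 1 ^ 20 \<le> (3::real) ^ 20" by (rule power_mono[OF exp_le]) simp
  have "exp 20 \<le> (3::real) ^ 20" using e1 e2 by simp
  then have L20: "L \<ge> 20" unfolding L using B Bpos by (subst ln_ge_iff) auto
  have Lpos: "L > 0" using L20 by simp
  have "L \<le> 2 * sqrt B"
  proof -
    have "ln (sqrt B) \<le> sqrt B - 1" using Bpos by (intro ln_le_minus_one) simp
    then show ?thesis unfolding L using ln_sqrt[of B] Bpos by simp
  qed
  moreover have "8 * sqrt B \<le> B"
  proof -
    have "sqrt B \<ge> 8" using B100 real_sqrt_le_mono[of 64 B] by simp
    then have "8 * sqrt B \<le> sqrt B * sqrt B" using Bpos by (intro mult_right_mono) auto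
    then show ?thesis using Bpos by simp
  qed
  ultimately have L4: "4 * L \<le> B" by simp
  have BL: "B / L \<ge> 4" using L4 Lpos by (simp add: field_simps Bn)
  have kk2: "kk \<ge> B / (2 * L)" using kk BL by (simp add: field_simps Bn)
  have kkpos: "kk > 0" using kk2 Bpos Lpos by (smt (verit) divide_pos_pos)
  have bk: "B / kk \<le> 2 * L"
  proof -
    have p: "0 < kk * (B / (2 * L))" using kkpos Bpos Lpos by simp
    have "B / kk \<le> B / (B / (2 * L))" using kk2 Bpos p by (intro divide_left_mono) auto
    also have "\<dots> = 2 * L" using Bpos Lpos by simp
    finally show ?thesis .
  qed
  let ?q = "B / (B + 1)" and ?r = "(B - 1) / (B + 1)" and ?\<rho> = "(B - 1) / B"
  have q_le: "?q \<le> exp (- 1 / (B + 1))"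
  proof -
    have "?q = 1 + (- 1 / (B + 1))" using Bpos by (simp add: field_simps Bn)
    also have "\<dots> \<le> exp (- 1 / (B + 1))" by (rule exp_ge_add_one_self)
    finally show ?thesis .
  qed
  have "?q ^ N \<le> exp (real N * (- 1 / (B + 1)))"
    by (rule exp_pow_le[OF q_le]) (use Bpos in simp)
  also have "\<dots> \<le> exp (- L)"
  proof -
    have "real N / (B + 1) \<ge> 4 * L" using n Bpos by (simp add: field_simps Bn)
    then have "real N * (- 1 / (B + 1)) \<le> - L" using Lpos by simp
    then show ?thesis by simp
  qed
  also have "exp (- L) = 1 / B" unfolding L using Bpos by (simp add: exp_minus')
  finally have qN: "?q ^ N * B \<le> 1" using Bpos by (simp add: field_simps Bn)
  have beta: "?q ^ N * B + B / kk \<le> 1 + 2 * L" using qN bk by simp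
  have beta0: "0 \<le> ?q ^ N * B + B / kk" using Bpos kkpos by simp
  have rq: "?r ^ M = ?q ^ M * ?\<rho> ^ M"
  proof -
    have "?r = ?q * ?\<rho>" using Bpos by (simp add: field_simps Bn)
    then show ?thesis by (metis power_mult_distrib)
  qed
  have rho_le: "?\<rho> \<le> exp (- 1 / B)"
  proof -
    have "?\<rho> = 1 + (- 1 / B)" using Bpos by (simp add: field_simps Bn)
    also have "\<dots> \<le> exp (- 1 / B)" by (rule exp_ge_add_one_self)
    finally show ?thesis .
  qed
  have lnL: "exp (2 * ln L) = L\<^sup>2"
  proof -
    have "exp (real 2 * ln L) = exp (ln L) ^ 2" by (rule exp_of_nat_mult)
    then show ?thesis using Lpos by simp
  qed
  have "?\<rho> ^ M \<le> exp (real M * (- 1 / B))"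
    by (rule exp_pow_le[OF rho_le]) (use B100 in simp)
  also have "\<dots> \<le> exp (1 / B - 2 * ln L)"
  proof -
    have "(2 * B * ln L - 1) / B \<le> real M / B" using m1 Bpos by (intro divide_right_mono) auto
    moreover have "(2 * B * ln L - 1) / B = 2 * ln L - 1 / B" using Bn by (simp add: diff_divide_distrib)
    ultimately have "real M / B \<ge> 2 * ln L - 1 / B" by simp
    then show ?thesis by simp
  qed
  also have "\<dots> = exp (1 / B) / L\<^sup>2" by (simp add: exp_diff lnL)
  also have "\<dots> \<le> 3 / L\<^sup>2"
  proof -
    have "exp (1 / B) \<le> exp 1" using B100 by simp
    then have "exp (1 / B) \<le> 3" using exp_le by linarith
    then show ?thesis using Lpos by (simp add: divide_right_mono)
  qed
  finally have rhoM: "?\<rho> ^ M \<le> 3 / L\<^sup>2" .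
  have rho0: "0 \<le> ?\<rho> ^ M" using B100 by simp
  have q_ge: "exp (- 1 / B) \<le> ?q"
  proof -
    have "1 + 1 / B \<le> exp (1 / B)" by (rule exp_ge_add_one_self)
    moreover have "0 < exp (1 / B) * (1 + 1 / B)" using Bpos by (intro mult_pos_pos) (auto simp: add_pos_pos)
    ultimately have "1 / exp (1 / B) \<le> 1 / (1 + 1 / B)" by (intro divide_left_mono) auto
    moreover have "1 / (1 + 1 / B) = ?q" using Bpos by (simp add: field_simps Bn)
    ultimately show ?thesis by (simp add: exp_minus')
  qed
  have "exp (- 1 / B - 2 * ln L) \<le> exp (real M * (- 1 / B))"
  proof -
    have "real M / B \<le> (2 * B * ln L + 1) / B" using m2 Bpos by (intro divide_right_mono) auto
    moreover have "(2 * B * ln L + 1) / B = 2 * ln L + 1 / B" using Bn by (simp add: add_divide_distrib)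
    ultimately have "real M / B \<le> 2 * ln L + 1 / B" by simp
    then show ?thesis by simp
  qed
  also have "\<dots> \<le> ?q ^ M" by (rule exp_pow_ge[OF q_ge])
  finally have qM0: "exp (- 1 / B) / L\<^sup>2 \<le> ?q ^ M" by (simp add: exp_diff lnL)
  have "(99 / 100) \<le> exp (- 1 / B)"
  proof -
    have "1 + (- 1 / B) \<le> exp (- 1 / B)" by (rule exp_ge_add_one_self)
    moreover have "1 / B \<le> (1 / 100)" using B100 by (simp add: field_simps Bn)
    ultimately show ?thesis by simp
  qed
  then have qM: "(99 / 100) / L\<^sup>2 \<le> ?q ^ M" using qM0 Lpos by (smt (verit) divide_right_mono zero_le_power2)
  have bx: "(?q ^ N * B + B / kk) * ?\<rho> ^ M \<le> (1 + 2 * L) * (3 / L\<^sup>2)"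
    by (rule mult_mono[OF beta rhoM]) (use Lpos beta0 rho0 in auto)
  have "(1 + 2 * L) * (3 / L\<^sup>2) = 3 / L\<^sup>2 + 6 / L" using Lpos by (simp add: field_simps power2_eq_square)
  also have "\<dots> \<le> 3 / 400 + 6 / 20"
  proof -
    have "L\<^sup>2 \<ge> 400" using L20 power_mono[of 20 L 2] by simp
    then have "3 / L\<^sup>2 \<le> 3 / 400" by (intro divide_left_mono) auto
    moreover have "6 / L \<le> 6 / 20" using L20 by (intro divide_left_mono) auto
    ultimately show ?thesis by simp
  qed
  finally have bx2: "(?q ^ N * B + B / kk) * ?\<rho> ^ M \<le> (123 / 400)" using bx by linarith
  have "?q ^ M - ?r ^ M * (?q ^ N * B + B / kk) = ?q ^ M * (1 - (?q ^ N * B + B / kk) * ?\<rho> ^ M)"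
    unfolding rq by (simp add: algebra_simps)
  also have "\<dots> \<ge> ((99 / 100) / L\<^sup>2) * (277 / 400)"
    by (rule mult_mono[OF qM]) (use bx2 Lpos Bpos in auto)
  finally have "?q ^ M - ?r ^ M * (?q ^ N * B + B / kk) \<ge> ((99 / 100) * (277 / 400)) / L\<^sup>2" by simp
  moreover have "1 / (2 * L\<^sup>2) \<le> ((99 / 100) * (277 / 400)) / L\<^sup>2" using Lpos by (simp add: field_simps Bn)
  ultimately show ?thesis by linarith
qed



lemma basicL:
  fixes B :: real assumes B: "B \<ge> 3 ^ 20"
  shows "ln B \<ge> 20" "4 * ln B \<le> B"
proof -
  have Bpos: "B > 0" using B by simp
  have e1: "exp (real 20 * 1) = exp 1 ^ 20" by (rule exp_of_nat_mult)
  have e2: "exp 1 ^ 20 \<le> (3::real) ^ 20" by (rule power_mono[OF exp_le]) simp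
  have "exp 20 \<le> (3::real) ^ 20" using e1 e2 by simp
  then show L20: "ln B \<ge> 20" using B Bpos by (subst ln_ge_iff) auto
  have "ln B \<le> 2 * sqrt B"
  proof -
    have "ln (sqrt B) \<le> sqrt B - 1" using Bpos by (intro ln_le_minus_one) simp
    then show ?thesis using ln_sqrt[of B] Bpos by simp
  qed
  moreover have "8 * sqrt B \<le> B"
  proof -
    have "sqrt B \<ge> 8" using B real_sqrt_le_mono[of 64 B] by simp
    then have "8 * sqrt B \<le> sqrt B * sqrt B" using Bpos by (intro mult_right_mono) auto
    then show ?thesis using Bpos by simp
  qed
  ultimately show "4 * ln B \<le> B" by simp
qed

theorem lemma3:
  "\<exists>B. \<forall>b \<ge> B. \<forall>x0 y0 K.
     proper_col b (num_colors b) x0 \<and> proper_col b (num_colors b) y0 \<and>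
     max_coupling b (num_colors b) K \<longrightarrow>
     measure_pmf.prob (coupled_dist b K x0 y0 (T_w b))
       {(X, Y). \<forall>i \<in> {1..b}. X i \<noteq> Y i \<longrightarrow> X i = Y 0 \<and> Y i = X 0}
     \<ge> 1 / (2 * (ln (real b))\<^sup>2)"
proof (intro exI[of _ "3 ^ 20"] allI impI)
  fix b :: nat and x0 y0 K
  assume b: "3 ^ 20 \<le> b"
  assume H: "proper_col b (num_colors b) x0 \<and> proper_col b (num_colors b) y0 \<and> max_coupling b (num_colors b) K"
  define B where "B = real b"
  define L where "L = ln B"
  define k where "k = num_colors b"
  define n where "n = nat \<lceil>4 * (B + 1) * L\<rceil>"
  define m where "m = T_w b - n"
  have B: "B \<ge> 3 ^ 20" unfolding B_def using b by (metis of_nat_le_iff of_nat_numeral of_nat_power)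
  have Bpos: "B > 0" using B by simp
  have L20: "L \<ge> 20" and L4: "4 * L \<le> B" unfolding L_def using basicL[OF B] by auto
  have Lpos: "L > 0" using L20 by simp
  have BL4: "B / L \<ge> 4" using L4 Lpos by (simp add: field_simps)
  have k_eq: "real k = real_of_int \<lfloor>B / L\<rfloor>"
  proof -
    have "0 \<le> \<lfloor>B / L\<rfloor>" using BL4 by simp
    then show ?thesis unfolding k_def num_colors_def B_def[symmetric] L_def[symmetric] by simp
  qed
  have kgt: "real k > B / L - 1" unfolding k_eq by simp
  have k3: "k \<ge> 3" using kgt BL4 by simp
  have kk: "real (k - 1) > B / L - 2" using kgt k3 by (simp add: of_nat_diff)
  have lnL0: "ln L \<ge> 0" using L20 by simp
  have Tdef: "T_w b = nat \<lceil>4 * (B + 1) * L + 2 * B * ln L\<rceil>"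
    unfolding T_w_def B_def L_def by simp
  have x0': "0 \<le> 4 * (B + 1) * L" using Bpos Lpos by simp
  have y0': "0 \<le> 2 * B * ln L" using Bpos lnL0 by simp
  have nR: "real n = real_of_int \<lceil>4 * (B + 1) * L\<rceil>" unfolding n_def using x0' by simp
  have TR: "real (T_w b) = real_of_int \<lceil>4 * (B + 1) * L + 2 * B * ln L\<rceil>" unfolding Tdef using x0' y0' by simp
  have n1: "real n \<ge> 4 * (B + 1) * L" "real n \<le> 4 * (B + 1) * L + 1" unfolding nR by simp_all
  have T1: "real (T_w b) \<ge> 4 * (B + 1) * L + 2 * B * ln L" "real (T_w b) \<le> 4 * (B + 1) * L + 2 * B * ln L + 1"
    unfolding TR by simp_all
  have nT: "n \<le> T_w b"
  proof -
    have "real n \<le> real (T_w b)" unfolding nR TR using y0' by (simp add: ceiling_mono)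
    then show ?thesis by simp
  qed
  have Tnm: "T_w b = n + m" unfolding m_def using nT by simp
  have mR: "real m = real (T_w b) - real n" unfolding m_def using nT by (simp add: of_nat_diff)
  have m1: "real m \<ge> 2 * B * ln L - 1" and m2: "real m \<le> 2 * B * ln L + 1"
    using mR n1 T1 by linarith+
  have core: "(B / (B + 1)) ^ m - ((B - 1) / (B + 1)) ^ m * ((B / (B + 1)) ^ n * B + B / real (k - 1)) \<ge> 1 / (2 * L\<^sup>2)"
    by (rule analytic_core[OF B L_def kk n1(1) m1 m2])
  have mc: "max_coupling b k K" using H unfolding k_def by blast
  have ps: "propS b k (x0, y0)" using H unfolding k_def propS_def by simp
  have b1: "1 \<le> b" using b by simp
  have mp: "measure_pmf.prob (coupled_dist b K x0 y0 (n + m)) {s. good b s}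
    \<ge> (real b / (real b + 1)) ^ m - ((real b - 1) / (real b + 1)) ^ m * ((real b / (real b + 1)) ^ n * real b + real b / real (k - 1))"
    by (rule main_prob[OF mc _ b1 ps]) (use k3 in simp)
  have ev: "{(X, Y). \<forall>i \<in> {1..b}. X i \<noteq> Y i \<longrightarrow> X i = Y 0 \<and> Y i = X 0} = {s. good b s}"
    unfolding good_def by auto
  show "measure_pmf.prob (coupled_dist b K x0 y0 (T_w b))
       {(X, Y). \<forall>i \<in> {1..b}. X i \<noteq> Y i \<longrightarrow> X i = Y 0 \<and> Y i = X 0}
     \<ge> 1 / (2 * (ln (real b))\<^sup>2)"
    unfolding ev Tnm using mp core unfolding B_def L_def by linarith
qed


end
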